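(* There exist absolute constants $c>0$ and $n_0$ such that for every integer $n\ge n_0$ and every $\varepsilon$ with $n^{-1/3} < \varepsilon < 1/2$, there exists an $n$-point set $X \subset \mathbb{R}$ such that every simultaneous $\varepsilon$-coreset of $X$ for $p$-Centrum with $k=1$ has size at least $c\,\varepsilon^{-1/2}\log n$.
   Context: For a finite multiset $Y\subset\mathbb{R}$ and a point $c\in\mathbb{R}$, $\mathrm{cost}_p(Y,c)$ is the sum of the $p$ largest values among $\{|y-c|\}_{y\in Y}$ (with multiplicity; the sum of all of them if $|Y|<p$). A coreset is a finite set of points with positive integer weights, viewed as a multiset; its size is the number of distinct points. A multiset $D\subset \mathbb{R}$ is a simultaneous $\varepsilon$-coreset of $X$ (with $|X|=n$) for $p$-Centrum with $k=1$ if for every $p\in\{1,\dots,n\}$ and every $c\in\mathbb{R}$, $(1-\varepsilon)\mathrm{cost}_p(X,c)\le\mathrm{cost}_p(D,c)\le(1+\varepsilon)\mathrm{cost}_p(X,c)$. *)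

theory Defs
  imports Complex_Main "HOL-Library.Multiset"
begin

definition cost :: "nat \<Rightarrow> real multiset \<Rightarrow> real \<Rightarrow> real" where
  "cost p Y c = sum_list (take p (rev (sorted_list_of_multiset (image_mset (\<lambda>y. \<bar>y - c\<bar>) Y))))"

text \<open>A coreset is a multiset (finite, positive integer weights); its size is the number of
  distinct points.\<close>
definition coreset_size :: "real multiset \<Rightarrow> nat" where
  "coreset_size D = card (set_mset D)"

definition simultaneous_coreset :: "real \<Rightarrow> real set \<Rightarrow> real multiset \<Rightarrow> bool" where
  "simultaneous_coreset eps X D \<longleftrightarrow>
     (\<forall>p\<in>{1..card X}. \<forall>c::real.
        (1 - eps) * cost p (mset_set X) c \<le> cost p D c \<and>
        cost p D c \<le> (1 + eps) * cost p (mset_set X) c)"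

end

theory Submission
  imports Defs
begin


definition dd :: "nat \<Rightarrow> real" where "dd i = sqrt (real i) - sqrt (real i - 1)"

lemma dd_alt: "i \<ge> 1 \<Longrightarrow> dd i = 1 / (sqrt (real i) + sqrt (real i - 1))"
proof -
  assume i: "i \<ge> 1"
  have pos: "sqrt (real i) + sqrt (real i - 1) > 0" using i by (simp add: add_pos_nonneg)
  have "(sqrt (real i) - sqrt (real i - 1)) * (sqrt (real i) + sqrt (real i - 1)) = 1"
    using i by (simp add: algebra_simps)
  then show ?thesis using pos unfolding dd_def by (simp add: field_simps)
qed

lemma dd_pos: "i \<ge> 1 \<Longrightarrow> dd i > 0"
  using dd_alt[of i] by (simp add: add_pos_nonneg)

lemma dd_strict: "1 \<le> i \<Longrightarrow> i < j \<Longrightarrow> dd j < dd i"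
proof -
  assume a: "1 \<le> i" "i < j"
  have "sqrt (real i) < sqrt (real j)" using a by simp
  moreover have "sqrt (real i - 1) < sqrt (real j - 1)" using a by simp
  ultimately have "sqrt (real i) + sqrt (real i - 1) < sqrt (real j) + sqrt (real j - 1)" by linarith
  moreover have "sqrt (real i) + sqrt (real i - 1) > 0" using a by (simp add: add_pos_nonneg)
  ultimately show ?thesis using a dd_alt[of i] dd_alt[of j] by (simp add: frac_less2)
qed

lemma sum_dd: "(\<Sum>i\<in>{1..p}. dd i) = sqrt (real p)"
proof (induction p)
  case 0 then show ?case by simp
next
  case (Suc p)
  have "{1..Suc p} = insert (Suc p) {1..p}" by auto
  then show ?case using Suc by (simp add: dd_def)
qed

definition XX :: "nat \<Rightarrow> real set" where "XX n = dd ` {1..n}"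

lemma inj_dd: "inj_on dd {1..n}"
  by (rule inj_onI) (metis atLeastAtMost_iff dd_strict less_irrefl linorder_neqE_nat)

lemma card_XX: "card (XX n) = n" "finite (XX n)"
  unfolding XX_def using card_image[OF inj_dd] by auto

lemma cost_XX:
  assumes "p \<le> n"
  shows "cost p (mset_set (XX n)) 0 = sqrt (real p)"
proof -
  let ?xs = "map dd [1..<Suc n]"
  have m: "image_mset (\<lambda>y. \<bar>y - 0\<bar>) (mset_set (XX n)) = mset ?xs"
  proof -
    have "mset_set (XX n) = image_mset dd (mset_set {1..n})"
      unfolding XX_def using image_mset_mset_set[OF inj_dd] by simp
    also have "mset_set {1..n} = mset [1..<Suc n]"
      using mset_set_set[of "[1..<Suc n]"] by (metis atLeastLessThanSuc_atLeastAtMost distinct_upt set_upt)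
    finally have "image_mset (\<lambda>y. \<bar>y - 0\<bar>) (mset_set (XX n)) = image_mset (\<lambda>i. \<bar>dd i - 0\<bar>) (mset [1..<Suc n])"
      by (simp add: multiset.map_comp comp_def)
    also have "\<dots> = image_mset dd (mset [1..<Suc n])"
      by (rule image_mset_cong) (simp only: set_mset_mset set_upt atLeastLessThan_iff, metis abs_of_pos dd_pos Suc_le_eq le_refl zero_less_Suc One_nat_def diff_zero)
    finally show ?thesis by simp
  qed
  have srt: "sorted (rev ?xs)"
    unfolding sorted_wrt_rev sorted_wrt_map
    by (rule sorted_wrt_mono_rel[OF _ sorted_wrt_upt]) (auto simp del: upt_Suc intro!: dd_strict[THEN less_imp_le])
  have so: "sort ?xs = rev ?xs" by (rule properties_for_sort) (use srt in auto)
  have "cost p (mset_set (XX n)) 0 = sum_list (take p ?xs)"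
    unfolding cost_def m sorted_list_of_multiset_mset so rev_rev_ident ..
  also have "take p ?xs = map dd [1..<Suc p]" using assms by (simp add: take_map del: upt_Suc)
  also have "sum_list (map dd [1..<Suc p]) = (\<Sum>i\<in>{1..p}. dd i)"
    by (simp add: sum_list_distinct_conv_sum_set atLeastLessThanSuc_atLeastAtMost del: upt_Suc)
  finally show ?thesis using sum_dd by simp
qed


lemma sum_take_pad:
  "sum_list (take p L) = (\<Sum>i<p. if i < length L then L!i else (0::real))"
proof (induction p)
  case 0 then show ?case by simp
next
  case (Suc p)
  show ?case
  proof (cases "p < length L")
    case True
    then show ?thesis using Suc by (simp add: take_Suc_conv_app_nth)
  next
    case False
    then show ?thesis using Suc by simp
  qed
qed

definition LL :: "real multiset \<Rightarrow> real list" where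
  "LL D = rev (sorted_list_of_multiset (image_mset (\<lambda>y. \<bar>y - 0\<bar>) D))"

definition EE :: "real multiset \<Rightarrow> nat \<Rightarrow> real" where
  "EE D i = (if i < length (LL D) then LL D ! i else 0)"

lemma cost_D: "cost p D 0 = (\<Sum>i<p. EE D i)"
  unfolding cost_def EE_def LL_def[symmetric] by (rule sum_take_pad)

lemma set_LL: "set (LL D) = abs ` set_mset D"
  unfolding LL_def by simp

lemma EE_in: "EE D i \<in> insert 0 (abs ` set_mset D)"
  unfolding EE_def using set_LL[of D] nth_mem[of i "LL D"] by auto

lemma EE_nonneg: "EE D i \<ge> 0"
  using EE_in[of D i] by auto

lemma EE_anti:
  assumes "i \<le> j" shows "EE D j \<le> EE D i"
proof (cases "j < length (LL D)")
  case False
  then show ?thesis using EE_nonneg[of D i] unfolding EE_def by simp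
next
  case True
  let ?S = "sorted_list_of_multiset (image_mset (\<lambda>y. \<bar>y - 0\<bar>) D)"
  have srt: "sorted ?S" by simp
  have len: "length (LL D) = length ?S" unfolding LL_def by simp
  have "LL D ! j = ?S ! (length ?S - Suc j)" "LL D ! i = ?S ! (length ?S - Suc i)"
    using True assms len unfolding LL_def by (auto simp: rev_nth)
  moreover have "?S ! (length ?S - Suc j) \<le> ?S ! (length ?S - Suc i)"
    by (rule sorted_nth_mono[OF srt]) (use True assms len in auto)
  ultimately show ?thesis using True assms unfolding EE_def by auto
qed

lemma window:
  fixes E :: "nat \<Rightarrow> real"
  assumes "u \<le> v" "v \<le> w" "\<And>i. u \<le> i \<Longrightarrow> i < w \<Longrightarrow> E i = E u"
  shows "real (w-u) * (\<Sum>i<v. E i) = real (w-v) * (\<Sum>i<u. E i) + real (v-u) * (\<Sum>i<w. E i)"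
proof -
  have aux: "p \<le> w \<Longrightarrow> (\<Sum>i<p. E i) = (\<Sum>i<u. E i) + real (p-u) * E u" if "u \<le> p" for p
    using that
  proof (induction p rule: dec_induct)
    case base then show ?case by simp
  next
    case (step q)
    have "(\<Sum>i<Suc q. E i) = (\<Sum>i<q. E i) + E q" by simp
    also have "E q = E u" using assms(3)[of q] step by auto
    finally show ?case using step by (simp add: Suc_diff_le algebra_simps)
  qed
  have hv: "(\<Sum>i<v. E i) = (\<Sum>i<u. E i) + (real v - real u) * E u"
    using aux[of v] assms(1,2) by (simp add: of_nat_diff)
  have hw: "(\<Sum>i<w. E i) = (\<Sum>i<u. E i) + (real w - real u) * E u"
    using aux[of w] assms(1,2) by (simp add: of_nat_diff)
  show ?thesis unfolding hv hw using assms(1,2) by (simp add: of_nat_diff algebra_simps)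
qed



lemma key:
  fixes x y z s e :: real
  assumes "0 \<le> x" "0 < y" "s*x \<le> y" "s*y \<le> z" "1 < s" "0 \<le> e" "e < 1"
    "(1-e)*(s^2+1) > 2*(1+e)*s"
  shows "(1-e)*(z^2-x^2)*y > (1+e)*((z^2-y^2)*x + (y^2-x^2)*z)"
proof -
  have "1 * x \<le> s * x" using assms by (intro mult_right_mono) auto
  then have xy: "x \<le> y" using assms by linarith
  have "1 * y < s * y" using assms by (intro mult_strict_right_mono) auto
  then have yz: "y < z" using assms by linarith
  have sr: "(1+e) < (1-e) * s"
  proof -
    have "(1-e)*(s^2+1) > 2*(1+e)*s" by fact
    then have "(1-e)*s*s + (1-e) > 2*(1+e)*s" by (simp add: power2_eq_square algebra_simps)
    moreover have "(1+e)*1 < (1+e)*s" using assms by (intro mult_strict_left_mono) auto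
    ultimately have "((1-e)*s)*s > (1+e)*s" using assms by (simp add: algebra_simps)
    then show ?thesis using assms(5) by simp
  qed
  define F where "F = (1-e)*(z+x)*y - (1+e)*(y^2+x*z)"
  have cz: "(1-e)*y - (1+e)*x > 0"
  proof -
    have "(1+e)*(s*x) \<le> (1+e)*y" using assms by (intro mult_left_mono) auto
    then have "(1+e)*x*s \<le> (1+e)*y" by (simp add: algebra_simps)
    moreover have "(1+e)*y < (1-e)*s*y" using sr assms by simp
    ultimately have "((1+e)*x)*s < ((1-e)*y)*s" by (simp add: algebra_simps)
    then show ?thesis using assms(5) by simp
  qed
  have F1: "F \<ge> (1-e)*(s*y+x)*y - (1+e)*(y^2+x*(s*y))"
  proof -
    have "F - ((1-e)*(s*y+x)*y - (1+e)*(y^2+x*(s*y))) = (z - s*y) * ((1-e)*y - (1+e)*x)"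
      unfolding F_def by (simp add: algebra_simps power2_eq_square)
    moreover have "(z - s*y) * ((1-e)*y - (1+e)*x) \<ge> 0" using cz assms by simp
    ultimately show ?thesis by linarith
  qed
  have F2: "(1-e)*(s*y+x)*y - (1+e)*(y^2+x*(s*y)) \<ge> y*((1-e)*s*y - (1+e)*y + (y/s)*((1-e) - (1+e)*s))"
  proof -
    have "(1+e)*1 < (1+e)*s" using assms by (intro mult_strict_left_mono) auto
    then have cx: "(1-e) - (1+e)*s < 0" using assms(6) by (simp add: algebra_simps)
    have "x \<le> y/s" using assms by (simp add: field_simps)
    then have "x*((1-e) - (1+e)*s) \<ge> (y/s)*((1-e) - (1+e)*s)" using cx by (intro mult_right_mono_neg) auto
    then have "y*(x*((1-e) - (1+e)*s)) \<ge> y*((y/s)*((1-e) - (1+e)*s))" using assms(2) by (intro mult_left_mono) auto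
    moreover have "(1-e)*(s*y+x)*y - (1+e)*(y^2+x*(s*y)) = y*((1-e)*s*y - (1+e)*y) + y*(x*((1-e) - (1+e)*s))"
      by (simp add: algebra_simps power2_eq_square)
    ultimately show ?thesis by (simp add: algebra_simps)
  qed
  have F3: "y*((1-e)*s*y - (1+e)*y + (y/s)*((1-e) - (1+e)*s)) = (y^2/s) * ((1-e)*(s^2+1) - 2*(1+e)*s)"
    using assms(5) by (simp add: field_simps power2_eq_square)
  have F4: "(y^2/s) * ((1-e)*(s^2+1) - 2*(1+e)*s) > 0" using assms by simp
  have Fpos: "F > 0" using F1 F2 F3 F4 by linarith
  have "(1-e)*(z^2-x^2)*y - (1+e)*((z^2-y^2)*x + (y^2-x^2)*z) = (z-x) * F"
    unfolding F_def by (simp add: algebra_simps power2_eq_square)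
  moreover have "(z-x)*F > 0" using Fpos xy yz by (simp add: mult_pos_pos)
  ultimately show ?thesis by linarith
qed



lemma window_contra:
  fixes eps s :: real and u v w :: nat and D :: "real multiset"
  assumes "1 \<le> u" "u < v" "v < w" "w \<le> n"
    and cs: "\<And>p. p \<in> {1..n} \<Longrightarrow> (1 - eps) * sqrt (real p) \<le> cost p D 0 \<and> cost p D 0 \<le> (1 + eps) * sqrt (real p)"
    and su: "s^2 * real u \<le> real v" and sv: "s^2 * real v \<le> real w"
    and s1: "1 < s" and e0: "0 \<le> eps" and e1: "eps < 1"
    and sc: "(1-eps)*(s^2+1) > 2*(1+eps)*s"
  shows "EE D w < EE D u"
proof (rule ccontr)
  assume "\<not> EE D w < EE D u"
  then have const: "EE D i = EE D u" if "u \<le> i" "i < w" for i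
  proof -
    have a: "EE D i \<le> EE D u" using that by (intro EE_anti) simp
    have b: "EE D w \<le> EE D i" using that by (intro EE_anti) simp
    show ?thesis using a b \<open>\<not> EE D w < EE D u\<close> by linarith
  qed
  let ?H = "\<lambda>p. (\<Sum>i<p. EE D i)"
  have eq: "real (w-u) * ?H v = real (w-v) * ?H u + real (v-u) * ?H w"
    using window[of u v w "EE D", OF less_imp_le[OF assms(2)] less_imp_le[OF assms(3)] const] by blast
  have Hu: "?H u \<le> (1+eps) * sqrt (real u)" using cs[of u] assms by (simp add: cost_D)
  have Hw: "?H w \<le> (1+eps) * sqrt (real w)" using cs[of w] assms by (simp add: cost_D)
  have Hv: "(1-eps) * sqrt (real v) \<le> ?H v" using cs[of v] assms by (simp add: cost_D)
  have "real (w-u) * ((1-eps) * sqrt (real v)) \<le> real (w-u) * ?H v"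
    using Hv by (intro mult_left_mono) auto
  also have "\<dots> \<le> real (w-v) * ((1+eps) * sqrt (real u)) + real (v-u) * ((1+eps) * sqrt (real w))"
    unfolding eq using Hu Hw by (intro add_mono mult_left_mono) auto
  finally have ineq: "(1-eps) * (real w - real u) * sqrt (real v) \<le> (1+eps) * ((real w - real v) * sqrt (real u) + (real v - real u) * sqrt (real w))"
    using assms by (simp add: of_nat_diff algebra_simps)
  have x: "s * sqrt (real u) \<le> sqrt (real v)"
  proof -
    have "s * sqrt (real u) = sqrt (s^2 * real u)" using s1 by (simp add: real_sqrt_mult)
    also have "\<dots> \<le> sqrt (real v)" using su by simp
    finally show ?thesis .
  qed
  have y: "s * sqrt (real v) \<le> sqrt (real w)"
  proof -
    have "s * sqrt (real v) = sqrt (s^2 * real v)" using s1 by (simp add: real_sqrt_mult)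
    also have "\<dots> \<le> sqrt (real w)" using sv by simp
    finally show ?thesis .
  qed
  have k: "(1-eps)*((sqrt (real w))^2-(sqrt (real u))^2)*sqrt (real v) > (1+eps)*(((sqrt (real w))^2-(sqrt (real v))^2)*sqrt (real u) + ((sqrt (real v))^2-(sqrt (real u))^2)*sqrt (real w))"
    by (rule key) (use x y assms in auto)
  then show False using ineq by simp
qed


lemma main_bound:
  fixes n :: nat and eps :: real
  assumes nbig: "exp 100 \<le> real n" and e1: "real n powr (-1/3) < eps" and e2: "eps < 1/2"
    and cor: "simultaneous_coreset eps (XX n) D"
  shows "1/200 * eps powr (-1/2) * ln (real n) \<le> real (coreset_size D)"
proof -
  have npos: "real n > 0" using nbig by (smt (verit) exp_gt_zero)
  have lnn: "ln (real n) \<ge> 100" using nbig npos by (metis ln_exp ln_le_cancel_iff exp_gt_zero)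
  have epos: "eps > 0" using e1 npos by (smt (verit) powr_gt_zero)
  define r where "r = sqrt eps"
  have rpos: "r > 0" unfolding r_def using epos by simp
  have r2: "r^2 = eps" unfolding r_def using epos by simp
  have r34: "r < 3/4"
  proof (rule ccontr)
    assume "\<not> r < 3/4"
    then have "(3/4)^2 \<le> r^2" by (intro power_mono) auto
    then show False using r2 e2 by (simp add: power2_eq_square)
  qed
  define s where "s = 1 + 8*r"
  define Z where "Z = s^5"
  define T where "T = 10/r"
  define t where "t k = T * Z^k" for k :: nat
  define u where "u k = nat \<lfloor>t k\<rfloor>" for k
  define v where "v k = nat \<lceil>t k * s^2\<rceil>" for k
  define A where "A = ln (real n / T)"
  define K where "K = nat \<lfloor>A / (40*r)\<rfloor>"
  have s1: "s > 1" unfolding s_def using rpos by simp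
  have s7: "s < 7" unfolding s_def using r34 by simp
  have Z1: "Z \<ge> 1" unfolding Z_def using s1 by simp
  have T1: "T \<ge> 10" unfolding T_def using rpos r34 by (simp add: field_simps)
  have Tpos: "T > 0" using T1 by simp
  have tT: "t k \<ge> T" for k unfolding t_def using Z1 Tpos by simp
  have tmono: "t k \<le> t k'" if "k \<le> k'" for k k'
    unfolding t_def using Z1 Tpos that by (simp add: power_increasing)
  have lnT: "ln T = ln 10 - ln eps / 2"
    unfolding T_def r_def using epos by (simp add: ln_div ln_sqrt)
  have lneps: "ln eps > - (1/3) * ln (real n)"
  proof -
    have "ln (real n powr (-1/3)) < ln eps" using e1 npos epos by (subst ln_less_cancel_iff) auto
    moreover have "ln (real n powr (-1/3)) = (-1/3) * ln (real n)" by (rule ln_powr)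
    ultimately show ?thesis by linarith
  qed
  have ln10: "ln (10::real) \<le> 9" using ln_le_minus_one[of "10::real"] by simp
  have Abound: "A \<ge> 5/6 * ln (real n) - 9"
    unfolding A_def using npos Tpos lnT lneps ln10 by (simp add: ln_div)
  have Apos: "A \<ge> 0" using Abound lnn by linarith
  have KA: "real K * (40*r) \<le> A"
  proof -
    have "real K \<le> A / (40*r)" unfolding K_def using Apos rpos by simp
    then show ?thesis using rpos by (simp add: field_simps)
  qed
  have tK: "t K \<le> real n"
  proof -
    have "s \<le> exp (8*r)" unfolding s_def using exp_ge_add_one_self[of "8*r"] by simp
    then have "Z^K \<le> (exp (8*r))^(5*K)" unfolding Z_def using s1
      by (simp add: power_mult[symmetric] power_mono)
    also have "\<dots> = exp (real (5*K) * (8*r))" by (subst exp_of_nat_mult[symmetric]) simp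
    also have "\<dots> \<le> exp A" using KA by simp
    also have "\<dots> = real n / T" unfolding A_def using npos Tpos by simp
    finally have "Z^K \<le> real n / T" .
    then show ?thesis unfolding t_def using Tpos by (simp add: field_simps)
  qed
  have cs: "(1 - eps) * sqrt (real p) \<le> cost p D 0 \<and> cost p D 0 \<le> (1 + eps) * sqrt (real p)"
    if "p \<in> {1..n}" for p
  proof -
    have "\<forall>c. (1 - eps) * cost p (mset_set (XX n)) c \<le> cost p D c \<and> cost p D c \<le> (1 + eps) * cost p (mset_set (XX n)) c"
      using cor that unfolding simultaneous_coreset_def card_XX(1) by blast
    then have "(1 - eps) * cost p (mset_set (XX n)) 0 \<le> cost p D 0 \<and> cost p D 0 \<le> (1 + eps) * cost p (mset_set (XX n)) 0"
      by blast
    then show ?thesis using cost_XX[of p n] that by simp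
  qed
  have sc: "(1-eps)*(s^2+1) > 2*(1+eps)*s"
  proof -
    have "(1-eps)*(s^2+1) - 2*(1+eps)*s = (s-1)^2 - eps*(s+1)^2"
      by (simp add: power2_eq_square algebra_simps)
    also have "\<dots> = (8*r)^2 - r^2*(2+8*r)^2" unfolding s_def r2[symmetric] by simp
    also have "\<dots> = r^2 * ((8)^2 - (2+8*r)^2)" by (simp add: power2_eq_square algebra_simps)
    also have "\<dots> > 0"
    proof -
      have "(2+8*r)^2 < 8^2" using rpos r34 by (intro power_strict_mono) auto
      then show ?thesis using rpos by simp
    qed
    finally show ?thesis by simp
  qed
  have dec: "EE D (u (Suc k)) < EE D (u k)" if "k < K" for k
  proof -
    have tk1: "t k \<ge> 1" using tT[of k] T1 by simp
    have u1: "real (u k) \<le> t k" "real (u k) > t k - 1"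
      unfolding u_def using tk1 by linarith+
    have uge: "u k \<ge> 1" unfolding u_def using tk1 by linarith
    have v1: "real (v k) \<ge> t k * s^2" "real (v k) < t k * s^2 + 1"
      unfolding v_def using tk1 s1 by (simp_all, linarith+)
    have tS: "t (Suc k) = t k * s^5" unfolding t_def Z_def by simp
    have w1: "real (u (Suc k)) \<le> t (Suc k)" "real (u (Suc k)) > t (Suc k) - 1"
      using tT[of "Suc k"] T1 unfolding u_def by linarith+
    have wn: "u (Suc k) \<le> n"
    proof -
      have "t (Suc k) \<le> t K" using that by (intro tmono) simp
      then show ?thesis using w1 tK by linarith
    qed
    have big: "t k * s^4 * (s - 1) \<ge> s^2 + 1"
    proof -
      have s4: "1 \<le> s^4" using s1 by simp
      have "t k * 1 \<le> t k * s^4" using s4 tT[of k] Tpos by (intro mult_left_mono) auto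
      then have "t k * s^4 \<ge> T" using tT[of k] by linarith
      then have "t k * s^4 * (s-1) \<ge> T * (s-1)" using s1 by (intro mult_right_mono) auto
      moreover have "T * (s-1) = 80" unfolding T_def s_def using rpos by simp
      moreover have "s^2 + 1 < 50"
      proof -
        have "s^2 < 7^2" using s1 s7 by (intro power_strict_mono) auto
        then show ?thesis by simp
      qed
      ultimately show ?thesis by linarith
    qed
    have sv: "s^2 * real (v k) \<le> real (u (Suc k))"
    proof -
      have "s^2 * real (v k) \<le> s^2 * (t k * s^2 + 1)" using v1 by (intro mult_left_mono) auto
      also have "\<dots> = t k * s^4 + s^2" by (simp add: algebra_simps power2_eq_square power4_eq_xxxx)
      also have "\<dots> \<le> t k * s^5 - 1"
      proof -
        have e5: "t k * s^5 = t k * s^4 * s" by (simp add: power_Suc2 numeral_eq_Suc)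
        have "t k * s^4 * (s - 1) = t k * s^4 * s - t k * s^4" by (simp add: algebra_simps)
        then show ?thesis using big e5 by linarith
      qed
      finally show ?thesis using w1 tS by linarith
    qed
    have su: "s^2 * real (u k) \<le> real (v k)"
    proof -
      have "s^2 * real (u k) \<le> s^2 * t k" using u1 by (intro mult_left_mono) auto
      then show ?thesis using v1 by (simp add: algebra_simps)
    qed
    have uv: "u k < v k"
    proof -
      have "real (u k) < s^2 * real (u k)" using uge s1 by (simp add: less_1_mult)
      then show ?thesis using su by linarith
    qed
    have vw: "v k < u (Suc k)"
    proof -
      have "real (v k) < s^2 * real (v k)" using uv s1 by (simp add: less_1_mult)
      then show ?thesis using sv by linarith
    qed
    have e0: "0 \<le> eps" using epos by simp
    have e1': "eps < 1" using e2 by simp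
    show ?thesis
      by (rule window_contra[OF uge uv vw wn cs su sv s1 e0 e1' sc])
  qed
  have chain: "EE D (u (i + Suc j)) < EE D (u i)" if "i + Suc j \<le> K" for i j
    using that
  proof (induction j)
    case 0
    have "i < K" using 0 by simp
    then show ?case using dec[of i] by simp
  next
    case (Suc j)
    have h1: "EE D (u (i + Suc j)) < EE D (u i)" using Suc.IH Suc.prems by simp
    have "i + Suc j < K" using Suc.prems by simp
    then have h2: "EE D (u (Suc (i + Suc j))) < EE D (u (i + Suc j))" by (rule dec)
    have "i + Suc (Suc j) = Suc (i + Suc j)" by simp
    then show ?case using h1 h2 by (simp only:)
  qed
  have inj: "inj_on (\<lambda>k. EE D (u k)) {0..K}"
  proof (rule inj_onI)
    fix a b assume ab: "a \<in> {0..K}" "b \<in> {0..K}" "EE D (u a) = EE D (u b)"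
    show "a = b"
    proof (rule ccontr)
      assume "a \<noteq> b"
      then consider "a < b" | "b < a" by linarith
      then show False
      proof cases
        case 1 then obtain j where j: "b = a + Suc j" by (metis add_Suc_right less_imp_Suc_add)
        have "a + Suc j \<le> K" using j ab(2) by simp
        then have "EE D (u (a + Suc j)) < EE D (u a)" by (rule chain)
        then have "EE D (u b) < EE D (u a)" unfolding j .
        then show False using ab(3) by linarith
      next
        case 2 then obtain j where j: "a = b + Suc j" by (metis add_Suc_right less_imp_Suc_add)
        have "b + Suc j \<le> K" using j ab(1) by simp
        then have "EE D (u (b + Suc j)) < EE D (u b)" by (rule chain)
        then have "EE D (u a) < EE D (u b)" unfolding j .
        then show False using ab(3) by linarith
      qed
    qed
  qed
  have "Suc K = card ((\<lambda>k. EE D (u k)) ` {0..K})" using card_image[OF inj] by simp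
  also have "\<dots> \<le> card (insert 0 (abs ` set_mset D))"
    by (rule card_mono) (simp, use EE_in in blast)
  also have "\<dots> \<le> Suc (card (abs ` set_mset D))" by (simp add: card_insert_if)
  also have "\<dots> \<le> Suc (card (set_mset D))" by (simp add: card_image_le)
  finally have Km: "real K \<le> real (coreset_size D)" unfolding coreset_size_def by simp
  have Kge: "real K \<ge> A/(40*r) - 1" unfolding K_def using Apos rpos by linarith
  have pw: "eps powr (-1/2) = 1/r"
    unfolding r_def using epos by (simp add: powr_minus_divide powr_half_sqrt[symmetric])
  have "A/(40*r) - 1 - ln (real n)/(200*r) = (5*A - 200*r - ln (real n))/(200*r)"
    using rpos by (simp add: field_simps)
  moreover have "5*A - 200*r - ln (real n) \<ge> 0" using Abound r34 lnn by linarith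
  moreover have "(5*A - 200*r - ln (real n))/(200*r) \<ge> 0" using calculation(2) rpos by simp
  ultimately have fin: "ln (real n)/(200*r) \<le> A/(40*r) - 1" by linarith
  have "1/200 * eps powr (-1/2) * ln (real n) = ln (real n)/(200*r)" unfolding pw by simp
  then show ?thesis using Kge Km fin by linarith
qed


theorem theorem4p9:
  shows "\<exists>c::real > 0. \<exists>n0::nat. \<forall>n::nat \<ge> n0. \<forall>eps::real.
           real n powr (-1/3) < eps \<and> eps < 1/2 \<longrightarrow>
           (\<exists>X::real set. finite X \<and> card X = n \<and>
              (\<forall>D. simultaneous_coreset eps X D \<longrightarrow>
                   real (coreset_size D) \<ge> c * eps powr (-1/2) * ln (real n)))"
proof (intro exI[of _ "1/200::real"] conjI exI[of _ "nat \<lceil>exp (100::real)\<rceil>"] allI impI)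
  show "(0::real) < 1/200" by simp
next
  fix n :: nat and eps :: real
  assume hn: "nat \<lceil>exp (100::real)\<rceil> \<le> n" and he: "real n powr (-1/3) < eps \<and> eps < 1/2"
  have nbig: "exp 100 \<le> real n"
  proof -
    have "exp 100 \<le> real (nat \<lceil>exp (100::real)\<rceil>)" by linarith
    also have "\<dots> \<le> real n" using hn by (simp only: of_nat_le_iff)
    finally show ?thesis .
  qed
  show "\<exists>X::real set. finite X \<and> card X = n \<and>
              (\<forall>D. simultaneous_coreset eps X D \<longrightarrow>
                   real (coreset_size D) \<ge> 1/200 * eps powr (-1/2) * ln (real n))"
    using main_bound[OF nbig] he card_XX by blast
qed

end
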